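(* Let $A>0$, $\phi>0$, $0<\gamma<1$, and $\alpha,\beta>0$ with $\alpha+\beta<1$. Consider the map $F_C:(0,\infty)^2\to(0,\infty)^2$, $$F_C(k,N)=\left(A\left[2\left(\frac{\alpha}{1-\alpha}\right)\phi\, k^{2}N^{\gamma}\right]^{\alpha}k^{\beta},\ \left(\frac{1-\alpha}{4\phi k}\right)N^{1-\gamma}\right).$$ Then $F_C$ has a unique fixed point $(\bar k_C,\bar N_C)$ with $\bar k_C,\bar N_C>0$, and $$\bar k_C=\bar k_S,\qquad \bar N_C=\Omega\,\bar N_S,\qquad \Omega=\frac{1}{2^{1/\gamma}}\in(0,1),$$ where $$\bar k_S=\left(A^{1/\alpha}\frac{\alpha}{2}\right)^{\frac{\alpha}{1-\beta-\alpha}},\qquad \bar N_S=A^{\frac{-1}{(1-\beta-\alpha)\gamma}}\left(\frac{1-\alpha}{2\phi}\right)^{\frac{1-\beta-2\alpha}{(1-\beta-\alpha)\gamma}}\left[\left(\frac{\alpha}{1-\alpha}\right)\phi\right]^{\frac{-\alpha}{(1-\beta-\alpha)\gamma}}$$ is the unique positive fixed point of the map $F_S(k,N)=\left(A\left[\frac{\alpha}{1-\alpha}\phi k^2N^{\gamma}\right]^{\alpha}k^{\beta},\ \frac{1-\alpha}{2\phi k}N^{1-\gamma}\right)$.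
   Context: Overlapping-generations model with human capital $k_t$ and adult population $N_t$. $F_C$ describes the case where father's and mother's childcare times are perfect complements: optimal fertility $n^*(k,N)=\frac{1-\alpha}{4\phi kN^{\gamma}}$ and education spending $e^*(k,N)=2\frac{\alpha}{1-\alpha}\phi k^2N^{\gamma}$, with $k_{t+1}=Ae^{*\alpha}k_t^{\beta}$, $N_{t+1}=n^*N_t$. $F_S$ is the analogous map for the perfect-substitutes case. "Economically meaningful" means both coordinates strictly positive. *)

theory Defs
  imports Complex_Main
begin

definition F_C :: "real \<Rightarrow> real \<Rightarrow> real \<Rightarrow> real \<Rightarrow> real \<Rightarrow> real \<times> real \<Rightarrow> real \<times> real" where
  "F_C A \<phi> \<gamma> \<alpha> \<beta> = (\<lambda>(k, N).
     (A * (2 * (\<alpha> / (1 - \<alpha>)) * \<phi> * k^2 * N powr \<gamma>) powr \<alpha> * k powr \<beta>,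
      ((1 - \<alpha>) / (4 * \<phi> * k)) * N powr (1 - \<gamma>)))"

definition F_S :: "real \<Rightarrow> real \<Rightarrow> real \<Rightarrow> real \<Rightarrow> real \<Rightarrow> real \<times> real \<Rightarrow> real \<times> real" where
  "F_S A \<phi> \<gamma> \<alpha> \<beta> = (\<lambda>(k, N).
     (A * ((\<alpha> / (1 - \<alpha>)) * \<phi> * k^2 * N powr \<gamma>) powr \<alpha> * k powr \<beta>,
      ((1 - \<alpha>) / (2 * \<phi> * k)) * N powr (1 - \<gamma>)))"

definition kbar_S :: "real \<Rightarrow> real \<Rightarrow> real \<Rightarrow> real \<Rightarrow> real \<Rightarrow> real" where
  "kbar_S A \<phi> \<gamma> \<alpha> \<beta> = (A powr (1 / \<alpha>) * (\<alpha> / 2)) powr (\<alpha> / (1 - \<beta> - \<alpha>))"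

definition Nbar_S :: "real \<Rightarrow> real \<Rightarrow> real \<Rightarrow> real \<Rightarrow> real \<Rightarrow> real" where
  "Nbar_S A \<phi> \<gamma> \<alpha> \<beta> =
     A powr (-1 / ((1 - \<beta> - \<alpha>) * \<gamma>))
     * ((1 - \<alpha>) / (2 * \<phi>)) powr ((1 - \<beta> - 2 * \<alpha>) / ((1 - \<beta> - \<alpha>) * \<gamma>))
     * ((\<alpha> / (1 - \<alpha>)) * \<phi>) powr (- \<alpha> / ((1 - \<beta> - \<alpha>) * \<gamma>))"

definition Omega :: "real \<Rightarrow> real" where
  "Omega \<gamma> = 1 / (2 powr (1 / \<gamma>))"

end

theory Submission
  imports Defs
begin

lemma key:
  fixes A a b \<gamma> \<alpha> \<beta> k N :: real
  assumes A: "A > 0" and a: "a > 0" and b: "b > 0" and g: "0 < \<gamma>"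
    and al: "\<alpha> > 0" and ab: "\<alpha> + \<beta> < 1" and k: "k > 0" and N: "N > 0"
  shows "(A*(a*k^2*N powr \<gamma>) powr \<alpha> * k powr \<beta> = k \<and> (b/k)*N powr (1-\<gamma>) = N) \<longleftrightarrow>
         (ln k = (ln A + \<alpha>*(ln a + ln b))/(1-\<alpha>-\<beta>) \<and> ln N = (ln b - ln k)/\<gamma>)"
proof -
  have p1: "A*(a*k^2*N powr \<gamma>) powr \<alpha> * k powr \<beta> > 0" using A a k N by simp
  have p2: "(b/k)*N powr (1-\<gamma>) > 0" using b k N by simp
  have l1: "ln (A*(a*k^2*N powr \<gamma>) powr \<alpha> * k powr \<beta>) = ln A + \<alpha>*(ln a + 2*ln k + \<gamma>*ln N) + \<beta>*ln k"
    using A a k N by (simp add: ln_mult ln_powr ln_realpow)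
  have l2: "ln ((b/k)*N powr (1-\<gamma>)) = ln b - ln k + (1-\<gamma>)*ln N"
    using b k N by (simp add: ln_mult ln_powr ln_div)
  have e1: "(A*(a*k^2*N powr \<gamma>) powr \<alpha> * k powr \<beta> = k) \<longleftrightarrow> ln A + \<alpha>*(ln a + 2*ln k + \<gamma>*ln N) + \<beta>*ln k = ln k"
    using p1 k l1 by (metis ln_inj_iff)
  have e2: "((b/k)*N powr (1-\<gamma>) = N) \<longleftrightarrow> ln b - ln k + (1-\<gamma>)*ln N = ln N"
    using p2 N l2 by (metis ln_inj_iff)
  have e2': "(ln b - ln k + (1-\<gamma>)*ln N = ln N) \<longleftrightarrow> ln N = (ln b - ln k)/\<gamma>"
    using g by (auto simp: field_simps)
  have D: "1 - \<alpha> - \<beta> > 0" using ab by simp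
  show ?thesis
  proof
    assume h: "A*(a*k^2*N powr \<gamma>) powr \<alpha> * k powr \<beta> = k \<and> (b/k)*N powr (1-\<gamma>) = N"
    then have h2: "\<gamma> * ln N = ln b - ln k" using e2 e2' g by (auto simp: field_simps)
    from h have "ln A + \<alpha>*(ln a + 2*ln k + \<gamma>*ln N) + \<beta>*ln k = ln k" using e1 by simp
    then have "ln A + \<alpha>*(ln a + 2*ln k + (ln b - ln k)) + \<beta>*ln k = ln k" using h2 by simp
    then have "ln k * (1-\<alpha>-\<beta>) = ln A + \<alpha>*(ln a + ln b)" by (simp add: algebra_simps)
    then have "ln k = (ln A + \<alpha>*(ln a + ln b))/(1-\<alpha>-\<beta>)" using D by (simp add: field_simps)
    then show "ln k = (ln A + \<alpha>*(ln a + ln b))/(1-\<alpha>-\<beta>) \<and> ln N = (ln b - ln k)/\<gamma>"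
      using h e2 e2' by simp
  next
    assume h: "ln k = (ln A + \<alpha>*(ln a + ln b))/(1-\<alpha>-\<beta>) \<and> ln N = (ln b - ln k)/\<gamma>"
    then have h2: "\<gamma> * ln N = ln b - ln k" using g by (auto simp: field_simps)
    from h have "ln k * (1-\<alpha>-\<beta>) = ln A + \<alpha>*(ln a + ln b)" using D by (simp add: field_simps)
    then have "ln A + \<alpha>*(ln a + 2*ln k + (ln b - ln k)) + \<beta>*ln k = ln k" by (simp add: algebra_simps)
    then have "ln A + \<alpha>*(ln a + 2*ln k + \<gamma>*ln N) + \<beta>*ln k = ln k" using h2 by simp
    then show "A*(a*k^2*N powr \<gamma>) powr \<alpha> * k powr \<beta> = k \<and> (b/k)*N powr (1-\<gamma>) = N"
      using e1 e2 e2' h by simp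
  qed
qed

lemma uniq:
  fixes A a b \<gamma> \<alpha> \<beta> :: real
  assumes A: "A > 0" and a: "a > 0" and b: "b > 0" and g: "0 < \<gamma>"
    and al: "\<alpha> > 0" and ab: "\<alpha> + \<beta> < 1"
  shows "\<exists>!p. fst p > 0 \<and> snd p > 0 \<and> (A*(a*(fst p)^2*(snd p) powr \<gamma>) powr \<alpha> * (fst p) powr \<beta> = fst p \<and> (b/fst p)*(snd p) powr (1-\<gamma>) = snd p)"
proof -
  define lk where "lk = (ln A + \<alpha>*(ln a + ln b))/(1-\<alpha>-\<beta>)"
  define ln' where "ln' = (ln b - lk)/\<gamma>"
  show ?thesis
  proof (rule ex1I[of _ "(exp lk, exp ln')"])
    show "fst (exp lk, exp ln') > 0 \<and> snd (exp lk, exp ln') > 0 \<and> (A*(a*(fst (exp lk, exp ln'))^2*(snd (exp lk, exp ln')) powr \<gamma>) powr \<alpha> * (fst (exp lk, exp ln')) powr \<beta> = fst (exp lk, exp ln') \<and> (b/fst (exp lk, exp ln'))*(snd (exp lk, exp ln')) powr (1-\<gamma>) = snd (exp lk, exp ln'))"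
      using key[OF A a b g al ab, of "exp lk" "exp ln'"] lk_def ln'_def by simp
  next
    fix p :: "real \<times> real"
    assume h: "fst p > 0 \<and> snd p > 0 \<and> (A*(a*(fst p)^2*(snd p) powr \<gamma>) powr \<alpha> * (fst p) powr \<beta> = fst p \<and> (b/fst p)*(snd p) powr (1-\<gamma>) = snd p)"
    then have "ln (fst p) = lk \<and> ln (snd p) = ln'"
      using key[OF A a b g al ab, of "fst p" "snd p"] lk_def ln'_def by simp
    then have "fst p = exp lk" "snd p = exp ln'" using h by auto
    then show "p = (exp lk, exp ln')" by (simp add: prod_eq_iff)
  qed
qed

lemma alg:
  fixes D g lA la lb lk \<alpha> \<beta> :: real
  assumes hD: "1-\<beta>-\<alpha> = D" and "D \<noteq> 0" "g \<noteq> 0" and hk: "lk = (lA + \<alpha>*(la+lb))/D"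
  shows "(-1/((1-\<beta>-\<alpha>)*g))*lA + ((1-\<beta>-2*\<alpha>)/((1-\<beta>-\<alpha>)*g))*lb + (-\<alpha>/((1-\<beta>-\<alpha>)*g))*la = (lb-lk)/g"
proof -
  have e: "1-\<beta>-2*\<alpha> = D-\<alpha>" using hD by simp
  show ?thesis unfolding e hD hk using assms(2,3) by (simp add: field_simps)
qed

theorem proposition3:
  fixes A \<phi> \<gamma> \<alpha> \<beta> :: real
  assumes "A > 0" and "\<phi> > 0" and "0 < \<gamma>" and "\<gamma> < 1"
    and "\<alpha> > 0" and "\<beta> > 0" and "\<alpha> + \<beta> < 1"
  shows "(\<exists>!p. fst p > 0 \<and> snd p > 0 \<and> F_C A \<phi> \<gamma> \<alpha> \<beta> p = p)
    \<and> (\<exists>!p. fst p > 0 \<and> snd p > 0 \<and> F_S A \<phi> \<gamma> \<alpha> \<beta> p = p)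
    \<and> kbar_S A \<phi> \<gamma> \<alpha> \<beta> > 0 \<and> Nbar_S A \<phi> \<gamma> \<alpha> \<beta> > 0
    \<and> F_S A \<phi> \<gamma> \<alpha> \<beta> (kbar_S A \<phi> \<gamma> \<alpha> \<beta>, Nbar_S A \<phi> \<gamma> \<alpha> \<beta>)
        = (kbar_S A \<phi> \<gamma> \<alpha> \<beta>, Nbar_S A \<phi> \<gamma> \<alpha> \<beta>)
    \<and> F_C A \<phi> \<gamma> \<alpha> \<beta> (kbar_S A \<phi> \<gamma> \<alpha> \<beta>, Omega \<gamma> * Nbar_S A \<phi> \<gamma> \<alpha> \<beta>)
        = (kbar_S A \<phi> \<gamma> \<alpha> \<beta>, Omega \<gamma> * Nbar_S A \<phi> \<gamma> \<alpha> \<beta>)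
    \<and> 0 < Omega \<gamma> \<and> Omega \<gamma> < 1"
proof -
  note as = assms
  have a1: "\<alpha> < 1" using as by simp
  define aS where "aS = \<alpha> / (1 - \<alpha>) * \<phi>"
  define bS where "bS = (1 - \<alpha>) / (2 * \<phi>)"
  define aC where "aC = 2 * (\<alpha> / (1 - \<alpha>)) * \<phi>"
  define bC where "bC = (1 - \<alpha>) / (4 * \<phi>)"
  have aS: "aS > 0" "bS > 0" "aC > 0" "bC > 0" using as a1 by (auto simp: aS_def bS_def aC_def bC_def)
  have e1: "aS * bS = \<alpha>/2" "aC * bC = \<alpha>/2"
    unfolding aS_def bS_def aC_def bC_def using a1 as(2) by (simp_all add: field_simps)
  have lab: "ln aS + ln bS = ln (\<alpha>/2)" "ln aC + ln bC = ln (\<alpha>/2)"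
    using aS ln_mult[of aS bS] ln_mult[of aC bC] e1 by simp_all
  have FS: "F_S A \<phi> \<gamma> \<alpha> \<beta> p = p \<longleftrightarrow> (A*(aS*(fst p)^2*(snd p) powr \<gamma>) powr \<alpha> * (fst p) powr \<beta> = fst p \<and> (bS/fst p)*(snd p) powr (1-\<gamma>) = snd p)" for p
    by (cases p) (simp add: F_S_def aS_def bS_def)
  have FC: "F_C A \<phi> \<gamma> \<alpha> \<beta> p = p \<longleftrightarrow> (A*(aC*(fst p)^2*(snd p) powr \<gamma>) powr \<alpha> * (fst p) powr \<beta> = fst p \<and> (bC/fst p)*(snd p) powr (1-\<gamma>) = snd p)" for p
    by (cases p) (simp add: F_C_def aC_def bC_def)
  have U1: "\<exists>!p. fst p > 0 \<and> snd p > 0 \<and> F_C A \<phi> \<gamma> \<alpha> \<beta> p = p"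
    unfolding FC using uniq[of A aC bC \<gamma> \<alpha> \<beta>] as aS by simp
  have U2: "\<exists>!p. fst p > 0 \<and> snd p > 0 \<and> F_S A \<phi> \<gamma> \<alpha> \<beta> p = p"
    unfolding FS using uniq[of A aS bS \<gamma> \<alpha> \<beta>] as aS by simp
  define k where "k = kbar_S A \<phi> \<gamma> \<alpha> \<beta>"
  define N where "N = Nbar_S A \<phi> \<gamma> \<alpha> \<beta>"
  have kpos: "k > 0" using as by (simp add: k_def kbar_S_def)
  have Npos: "N > 0" using as aS(1,2) unfolding aS_def bS_def by (simp add: N_def Nbar_S_def)
  have Om: "0 < Omega \<gamma>" "Omega \<gamma> < 1" using as by (auto simp: Omega_def)
  have D: "1 - \<alpha> - \<beta> > 0" "1 - \<beta> - \<alpha> > 0" using as by simp_all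
  have lk1: "ln (A powr (1/\<alpha>) * (\<alpha>/2)) = ln A/\<alpha> + ln(\<alpha>/2)"
    using as ln_mult[of "A powr (1/\<alpha>)" "\<alpha>/2"] by (simp add: ln_powr del: times_divide_eq_right)
  have lk2: "ln k = \<alpha>/(1-\<beta>-\<alpha>) * ln (A powr (1/\<alpha>) * (\<alpha>/2))" using as by (simp add: k_def kbar_S_def ln_powr)
  have lnk: "ln k = (ln A + \<alpha>*(ln aS + ln bS))/(1-\<alpha>-\<beta>)"
  proof -
    have "\<alpha> * (ln A/\<alpha> + ln(\<alpha>/2)) = ln A + \<alpha>*ln(\<alpha>/2)" using as by (simp add: distrib_left)
    then have "ln k = (ln A + \<alpha>*ln(\<alpha>/2))/(1-\<beta>-\<alpha>)" unfolding lk2 lk1 by simp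
    then show ?thesis unfolding lab by (simp add: algebra_simps)
  qed
  have lnk': "ln k = (ln A + \<alpha>*(ln aC + ln bC))/(1-\<alpha>-\<beta>)" using lnk lab by simp
  have lN1: "ln N = (-1 / ((1 - \<beta> - \<alpha>) * \<gamma>)) * ln A + ((1 - \<beta> - 2 * \<alpha>) / ((1 - \<beta> - \<alpha>) * \<gamma>)) * ln bS
     + (- \<alpha> / ((1 - \<beta> - \<alpha>) * \<gamma>)) * ln aS"
  proof -
    have NN: "N = A powr (-1 / ((1 - \<beta> - \<alpha>) * \<gamma>)) * bS powr ((1 - \<beta> - 2 * \<alpha>) / ((1 - \<beta> - \<alpha>) * \<gamma>))
       * aS powr (- \<alpha> / ((1 - \<beta> - \<alpha>) * \<gamma>))"
      unfolding N_def Nbar_S_def aS_def bS_def by (rule refl)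
    show ?thesis unfolding NN using as(1) aS(1,2)
      by (simp add: ln_mult ln_powr del: powr_minus_divide)
  qed
  have lnN: "ln N = (ln bS - ln k)/\<gamma>"
  proof -
    have ee: "1-\<alpha>-\<beta> = 1-\<beta>-\<alpha>" by simp
    have lnkb: "ln k = (ln A + \<alpha>*(ln aS + ln bS))/(1-\<beta>-\<alpha>)" using lnk unfolding ee .
    have "1-\<beta>-\<alpha> \<noteq> 0" "\<gamma> \<noteq> 0" using D as by auto
    from alg[OF refl this lnkb] show ?thesis unfolding lN1 by simp
  qed
  have lO: "ln (Omega \<gamma>) = - ln 2 / \<gamma>" by (simp add: Omega_def ln_div ln_powr)
  have bCS: "bC = bS / 2" by (simp add: bC_def bS_def)
  have lbC: "ln bC = ln bS - ln 2" unfolding bCS using aS(2) ln_div[of bS 2] by simp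
  have lnON: "ln (Omega \<gamma> * N) = (ln bC - ln k)/\<gamma>"
    using Om Npos lO lnN lbC as by (simp add: ln_mult field_simps)
  have S: "F_S A \<phi> \<gamma> \<alpha> \<beta> (k, N) = (k, N)"
    unfolding FS using key[OF as(1) aS(1,2) as(3,5,7) kpos Npos] lnk lnN by simp
  have C: "F_C A \<phi> \<gamma> \<alpha> \<beta> (k, Omega \<gamma> * N) = (k, Omega \<gamma> * N)"
    unfolding FC using key[OF as(1) aS(3,4) as(3,5,7) kpos, of "Omega \<gamma> * N"] Om Npos lnk' lnON by simp
  show ?thesis using U1 U2 kpos Npos S C Om by (simp add: k_def N_def)
qed

end
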